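(* Let $N\in\mathbb{N}$, $d\in\mathbb{N}$, and let $b_1,\dots,b_d\in\{\lceil N^{1/2}/\sqrt{2}\rceil,\dots,\lfloor N^{1/2}\rfloor\}$ be coprime to $N$ with $b_{i+1}=b_i+1$ for $1\le i<d$. Set $D:=b_1+\lfloor N/b_d\rfloor$. For each $i$ write the $b_i$-adic digit polynomial of $N$ as $P_{b_i}=n_{2,i}X^2+n_{1,i}X+n_{0,i}$ (i.e. $n_{k,i}$ is the coefficient of $X^k$ in $P_{b_i}$). Suppose $\gcd(D+z,N)=1$ for every $z\in\{0,\dots,2d-2\}$ and $n_{1,i}\le n_{0,i}+1$ for every $i$. Then $\gcd(n_{2,i}b_i,N)=1$ for every $i$, and, defining $b_{d+i}:=n_{0,i}\cdot n_{2,i}^{-1}\cdot b_i^{-1}\bmod N$ for $1\le i\le d$, we have $\gcd(b_j-b_k,N)=1$ for all $j,k\in\{1,\dots,2d\}$ with $j\neq k$.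
   Context: For an integer $b\ge 2$, if $N=\sum_{i\ge0}n_ib^i$ is the unique base-$b$ representation of $N$ with digits $n_i\in\{0,\dots,b-1\}$, the $b$-adic digit polynomial of $N$ is $P_b:=\sum_{i\ge0}n_iX^i\in\mathbb{Z}[X]$. *)

theory Defs
  imports Complex_Main "HOL-Computational_Algebra.Polynomial" "HOL-Number_Theory.Number_Theory"
begin

text \<open>For b >= 2 all digits of index >= N vanish
  (b^N > N), so the finite sum below is the full digit polynomial.\<close>
definition digit_poly :: "nat \<Rightarrow> nat \<Rightarrow> int poly" where
  "digit_poly b N = (\<Sum>i\<le>N. Polynomial.monom (int ((N div b ^ i) mod b)) i)"

end

theory Submission
  imports Defs
begin

lemma bnd:
  fixes N b :: nat
  assumes "\<lceil>sqrt (real N) / sqrt 2\<rceil> \<le> int b" "int b \<le> \<lfloor>sqrt (real N)\<rfloor>" "b \<ge> 2" "coprime b N"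
  shows "b*b \<le> N \<and> N < 2*(b*b)"
proof -
  have "real_of_int (int b) \<le> sqrt (real N)" using assms(2) le_floor_iff by blast
  hence "real b \<le> sqrt (real N)" by simp
  hence "real b * real b \<le> sqrt (real N) * sqrt (real N)"
    by (intro mult_mono) auto
  hence "real b * real b \<le> real N" by simp
  hence a: "b*b \<le> N" by (metis of_nat_le_iff of_nat_mult)
  have "sqrt (real N) / sqrt 2 \<le> real_of_int (int b)" using assms(1) ceiling_le_iff by blast
  hence "sqrt (real N) / sqrt 2 \<le> real b" by simp
  hence "sqrt (real N) \<le> real b * sqrt 2" by (simp add: divide_le_eq)
  hence "sqrt (real N) ^ 2 \<le> (real b * sqrt 2)^2"
    by (intro power_mono) auto
  moreover have "(real b * sqrt 2)^2 = 2*(real b*real b)" by (simp add: power_mult_distrib power2_eq_square[of "real b"])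
  ultimately have "real N \<le> 2 * (real b * real b)" by simp
  hence c: "N \<le> 2*(b*b)" by (metis of_nat_le_iff of_nat_mult of_nat_numeral)
  have "N \<noteq> 2*(b*b)"
  proof
    assume "N = 2*(b*b)"
    hence "b dvd N" by simp
    hence "b dvd 1" using assms(4) by (metis coprime_common_divisor dvd_refl)
    thus False using assms(3) by simp
  qed
  with a c show ?thesis by simp
qed

lemma coeff_dp: "k \<le> N \<Longrightarrow> Polynomial.coeff (digit_poly b N) k = int ((N div b ^ k) mod b)"
  unfolding digit_poly_def by (simp add: coeff_sum coeff_monom)

lemma digits:
  fixes N b :: nat
  assumes "b \<ge> 2" "b*b \<le> N" "N < 2*(b*b)"
  shows "Polynomial.coeff (digit_poly b N) 0 = int (N mod b)"
    "Polynomial.coeff (digit_poly b N) 1 = int (N div b - b)"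
    "Polynomial.coeff (digit_poly b N) 2 = 1"
    "b \<le> N div b" "N div b < 2*b"
proof -
  have N2: "2 \<le> N" using assms mult_le_mono[of 2 b 1 b] by linarith
  show "Polynomial.coeff (digit_poly b N) 0 = int (N mod b)" using coeff_dp[of 0 N b] by simp
  have b0: "0 < b" using assms by simp
  show q1: "b \<le> N div b" using assms b0 by (simp add: less_eq_div_iff_mult_less_eq)
  have "N div b < 2*b" using assms b0 by (simp add: div_less_iff_less_mult mult.assoc)
  thus "N div b < 2*b" .
  hence "(N div b) mod b = N div b - b" using q1 le_mod_geq[OF q1]
    by (simp add: mod_less)
  thus "Polynomial.coeff (digit_poly b N) 1 = int (N div b - b)" using coeff_dp[of 1 N b] N2 by simp
  have "N div (b^2) = 1" using assms by (intro div_nat_eqI) (auto simp: power2_eq_square)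
  thus "Polynomial.coeff (digit_poly b N) 2 = 1" using coeff_dp[of 2 N b] N2 assms(1) by simp
qed

lemma step:
  fixes N b :: nat
  assumes "b \<ge> 2" "b*b \<le> N" "N < 2*(b*b)" "N div b - b \<le> N mod b + 1"
  shows "N div (b+1) = N div b - 1"
proof -
  have q1: "b \<le> N div b" "N div b < 2*b" using digits assms by auto
  have e: "N = b * (N div b) + N mod b" by simp
  have r: "N mod b < b" using assms by simp
  show ?thesis
  proof (rule div_nat_eqI)
    have "(b+1)*(N div b - 1) = b*(N div b) + (N div b) - b - 1" using q1 assms
      by (simp add: algebra_simps diff_mult_distrib2)
    thus "(b + 1) * (N div b - 1) \<le> N" using assms(4) e by linarith
    have "(b+1) * Suc (N div b - 1) = b*(N div b) + N div b" using q1 assms by (simp add: algebra_simps)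
    thus "N < (b + 1) * Suc (N div b - 1)" using e r q1 by linarith
  qed
qed

lemma small:
  fixes D N d a :: nat
  assumes "\<And>z. z \<in> {0..2 * d - 2} \<Longrightarrow> gcd (D + z) N = 1" "1 \<le> a" "a \<le> 2*d - 1"
  shows "coprime a N"
proof (rule ccontr)
  assume "\<not> coprime a N"
  then obtain p where p: "prime p" "p dvd a" "p dvd N"
  proof -
    have "gcd a N \<noteq> 1" using \<open>\<not> coprime a N\<close> coprime_iff_gcd_eq_1 by blast
    then obtain p where "prime p" "p dvd gcd a N" using prime_factor_nat by blast
    thus ?thesis using that by simp
  qed
  have "p \<le> a" using p assms(2) by (simp add: dvd_imp_le)
  have pp: "p > 0" using p prime_gt_0_nat by auto
  define z where "z = (p - D mod p) mod p"
  have "z < p" unfolding z_def using pp by simp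
  hence "z \<in> {0..2*d-2}" using \<open>p \<le> a\<close> assms by auto
  have "p dvd D + z"
  proof (cases "D mod p = 0")
    case True thus ?thesis unfolding z_def by (simp add: dvd_eq_mod_eq_0)
  next
    case False
    hence "z = p - D mod p" unfolding z_def using pp by (simp add: mod_less)
    moreover have "D = p * (D div p) + D mod p" by simp
    moreover have "D mod p < p" using pp by simp
    ultimately have "D + z = p * (D div p) + p" by linarith
    thus ?thesis by simp
  qed
  hence "p dvd gcd (D+z) N" using p by simp
  thus False using assms(1)[OF \<open>z \<in> _\<close>] p by (simp add: prime_gt_1_nat)
qed


lemma small_int:
  fixes D N d :: nat and x :: int
  assumes "\<And>z. z \<in> {0..2 * d - 2} \<Longrightarrow> gcd (D + z) N = 1" "x \<noteq> 0" "\<bar>x\<bar> \<le> int (2*d) - 1"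
  shows "gcd x (int N) = 1"
proof -
  have a: "coprime (nat \<bar>x\<bar>) N"
  proof (rule small[of d D N])
    show "\<And>z. z \<in> {0..2 * d - 2} \<Longrightarrow> gcd (D + z) N = 1" by (rule assms(1))
    show "1 \<le> nat \<bar>x\<bar>" using assms(2) by arith
    show "nat \<bar>x\<bar> \<le> 2 * d - 1" using assms(3) by arith
  qed
  have "gcd x (int N) = gcd \<bar>x\<bar> (int N)" by simp
  also have "\<bar>x\<bar> = int (nat \<bar>x\<bar>)" by simp
  also have "gcd (int (nat \<bar>x\<bar>)) (int N) = int (gcd (nat \<bar>x\<bar>) N)" by (rule gcd_int_int_eq)
  also have "\<dots> = 1" using a unfolding coprime_iff_gcd_eq_1 by simp
  finally show ?thesis .
qed

theorem lemma2p13: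
  fixes N d :: nat and b :: "nat \<Rightarrow> nat"
    and n :: "nat \<Rightarrow> nat \<Rightarrow> int" and D :: nat and B :: "nat \<Rightarrow> int"
  assumes b_range: "\<And>i. i \<in> {1..d} \<Longrightarrow>
      \<lceil>sqrt (real N) / sqrt 2\<rceil> \<le> int (b i) \<and> int (b i) \<le> \<lfloor>sqrt (real N)\<rfloor>"
    and b_base: "\<And>i. i \<in> {1..d} \<Longrightarrow> b i \<ge> 2"
    and b_coprime: "\<And>i. i \<in> {1..d} \<Longrightarrow> coprime (b i) N"
    and b_consec: "\<And>i. 1 \<le> i \<Longrightarrow> i < d \<Longrightarrow> b (i + 1) = b i + 1"
    and D_def: "D = b 1 + N div b d"
    and n_def: "\<And>k i. n k i = Polynomial.coeff (digit_poly (b i) N) k"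
    and D_gcd: "\<And>z. z \<in> {0..2 * d - 2} \<Longrightarrow> gcd (D + z) N = 1"
    and digit_cond: "\<And>i. i \<in> {1..d} \<Longrightarrow> n 1 i \<le> n 0 i + 1"
    and B_def: "\<And>j. B j = (if j \<le> d then int (b j)
        else (n 0 (j - d) * modular_inverse (int N) (n 2 (j - d))
               * modular_inverse (int N) (int (b (j - d)))) mod int N)"
  shows "(\<forall>i \<in> {1..d}. gcd (n 2 i * int (b i)) (int N) = 1) \<and>
         (\<forall>j \<in> {1..2 * d}. \<forall>k \<in> {1..2 * d}. j \<noteq> k \<longrightarrow> gcd (B j - B k) (int N) = 1)"
  proof -
  have bb: "b i * b i \<le> N \<and> N < 2*(b i*b i)" if "i \<in> {1..d}" for i
    using bnd b_range b_base b_coprime that by blast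
  have n2: "n 2 i = 1" and n0: "n 0 i = int (N mod b i)" and n1: "n 1 i = int (N div b i - b i)"
    and qb: "b i \<le> N div b i" if "i \<in> {1..d}" for i
    using digits[of "b i" N] bb[OF that] b_base[OF that] n_def by auto
  have part1: "\<forall>i \<in> {1..d}. gcd (n 2 i * int (b i)) (int N) = 1"
  proof
    fix i assume i: "i \<in> {1..d}"
    have "gcd (int (b i)) (int N) = int (gcd (b i) N)" by (rule gcd_int_int_eq)
    also have "\<dots> = 1" using b_coprime[OF i] unfolding coprime_iff_gcd_eq_1 by simp
    finally show "gcd (n 2 i * int (b i)) (int N) = 1" using n2[OF i] by simp
  qed
  have hbi: "1 \<le> i \<longrightarrow> i \<le> d \<longrightarrow> b i = b 1 + (i - 1)" for i
  proof (induction i)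
    case 0 then show ?case by simp
  next
    case (Suc i)
    show ?case
    proof (cases "i = 0")
      case True then show ?thesis by simp
    next
      case False
      then show ?thesis using Suc b_consec[of i] by auto
    qed
  qed
  have hqi: "1 \<le> i \<longrightarrow> i \<le> d \<longrightarrow> N div b i + (i - 1) = N div b 1" for i
  proof (induction i)
    case 0 then show ?case by simp
  next
    case (Suc i)
    show ?case
    proof (cases "i = 0")
      case True then show ?thesis by simp
    next
      case False
      show ?thesis
      proof (intro impI)
        assume "1 \<le> Suc i" "Suc i \<le> d"
        hence i: "i \<in> {1..d}" using False by auto
        have c: "N div b i - b i \<le> N mod b i + 1"
          using digit_cond[OF i] n0[OF i] n1[OF i] by simp
        have "N div b (Suc i) = N div (b i + 1)" using b_consec[of i] i \<open>Suc i \<le> d\<close> by simp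
        also have "\<dots> = N div b i - 1"
          using step[OF _ _ _ c] bb[OF i] b_base[OF i] by blast
        finally have "N div b (Suc i) = N div b i - 1" .
        moreover have "N div b i \<ge> 1" using qb[OF i] b_base[OF i] by simp
        ultimately show "N div b (Suc i) + (Suc i - 1) = N div b 1"
          using Suc i by auto
      qed
    qed
  qed
  have Ngt: "int N > 1" if "d \<ge> 1"
  proof -
    have "1 \<in> {1..d}" using that by simp
    from bb[OF this] b_base[OF this] have "4 \<le> N" using mult_le_mono[of 2 "b 1" 2 "b 1"] by linarith
    thus ?thesis by simp
  qed
  have hB: "[B (d+k) = - int (N div b k)] (mod int N)" if k: "k \<in> {1..d}" for k
  proof -
    have N1: "int N > 1" using Ngt k by auto
    define u where "u = modular_inverse (int N) (int (b k))"
    define q where "q = int (N div b k)"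
    define r where "r = int (N mod b k)"
    have Bk: "B (d+k) = (r * u) mod int N"
      using B_def[of "d+k"] k n2[OF k] n0[OF k] N1 unfolding u_def r_def by simp
    have cop: "coprime (int (b k)) (int N)" using b_coprime[OF k] by simp
    have "[int (b k) * u = 1] (mod int N)" unfolding u_def by (rule cong_modular_inverse1[OF cop])
    then obtain t where t: "1 = int (b k) * u + int N * t" by (auto simp: cong_iff_lin)
    have "int N = int (b k) * q + r" unfolding q_def r_def
      by (metis div_mult_mod_eq mult.commute of_nat_add of_nat_mult)
    hence "r * u = int N * u - q * (int (b k) * u)" by (simp add: algebra_simps)
    also have "\<dots> = int N * u - q * (1 - int N * t)"
    proof -
      have "int (b k) * u = 1 - int N * t" using t by linarith
      thus ?thesis by simp
    qed
    also have "\<dots> = - q + int N * (u + q * t)" by (simp add: algebra_simps)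
    finally have "[- q = r * u] (mod int N)" by (auto simp: cong_iff_lin)
    hence "[r * u mod int N = - q] (mod int N)"
      by (metis cong_mod_left cong_sym)
    thus ?thesis using Bk q_def by simp
  qed
  have Dz: "int (b j) + int (N div b k) = int (D + ((j - 1) + (d - k)))" if "j \<in> {1..d}" "k \<in> {1..d}" for j k
    using hbi[of j] hqi[of k] hqi[of d] that D_def by auto
  have part2: "\<forall>j \<in> {1..2 * d}. \<forall>k \<in> {1..2 * d}. j \<noteq> k \<longrightarrow> gcd (B j - B k) (int N) = 1"
  proof (intro ballI impI)
    fix j k assume j: "j \<in> {1..2*d}" and k: "k \<in> {1..2*d}" and jk: "j \<noteq> k"
    have gD: "gcd (int (D + z)) (int N) = 1" if "z \<le> 2*d-2" for z
    proof -
      have "gcd (int (D + z)) (int N) = int (gcd (D+z) N)" by (rule gcd_int_int_eq)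
      thus ?thesis using D_gcd[of z] that by simp
    qed
    consider "j \<le> d" "k \<le> d" | "j \<le> d" "k > d" | "j > d" "k \<le> d" | "j > d" "k > d" by linarith
    then show "gcd (B j - B k) (int N) = 1"
    proof cases
      case 1
      hence "B j - B k = int j - int k" using B_def[of j] B_def[of k] hbi[of j] hbi[of k] j k by auto
      thus ?thesis using small_int[OF D_gcd, where x="int j - int k"] 1 j k jk by auto
    next
      case 2
      define k' where "k' = k - d"
      have k': "k' \<in> {1..d}" "k = d + k'" using 2 k unfolding k'_def by auto
      have jj: "j \<in> {1..d}" using 2 j by auto
      have Bj: "B j = int (b j)" using B_def[of j] 2 by simp
      have "[int (b j) - B (d+k') = int (b j) - (- int (N div b k'))] (mod int N)"
        by (rule cong_diff[OF cong_refl hB[OF k'(1)]])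
      hence "[B j - B k = int (b j) - (- int (N div b k'))] (mod int N)"
        using Bj k'(2) by simp
      hence "[B j - B k = int (D + ((j - 1) + (d - k')))] (mod int N)" using Dz[OF jj k'(1)] by simp
      hence eq: "gcd (B j - B k) (int N) = gcd (int (D + ((j - 1) + (d - k')))) (int N)" by (rule cong_gcd_eq)
      have zb: "(j - 1) + (d - k') \<le> 2*d - 2" using jj k' by auto
      show ?thesis using eq gD[OF zb] by (rule trans)
    next
      case 3
      define j' where "j' = j - d"
      have j': "j' \<in> {1..d}" "j = d + j'" using 3 j unfolding j'_def by auto
      have kk: "k \<in> {1..d}" using 3 k by auto
      have Bk: "B k = int (b k)" using B_def[of k] 3 by simp
      have "[B (d+j') - int (b k) = (- int (N div b j')) - int (b k)] (mod int N)"
        by (rule cong_diff[OF hB[OF j'(1)] cong_refl])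
      hence "[B j - B k = (- int (N div b j')) - int (b k)] (mod int N)"
        using Bk j'(2) by simp
      moreover have e: "- int (N div b j') - int (b k) = - int (D + ((k - 1) + (d - j')))"
        using Dz[OF kk j'(1)] by linarith
      ultimately have "[B j - B k = - int (D + ((k - 1) + (d - j')))] (mod int N)" by (simp only: e)
      hence eq: "gcd (B j - B k) (int N) = gcd (- int (D + ((k - 1) + (d - j')))) (int N)" by (rule cong_gcd_eq)
      have zb: "(k - 1) + (d - j') \<le> 2*d - 2" using kk j' by auto
      have g3: "gcd (- int (D + ((k - 1) + (d - j')))) (int N) = 1" using gD[OF zb] by (simp only: gcd_neg1_int)
      show ?thesis using eq g3 by (rule trans)
    next
      case 4
      define j' where "j' = j - d"
      define k' where "k' = k - d"
      have j': "j' \<in> {1..d}" "j = d + j'" using 4 j unfolding j'_def by auto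
      have k': "k' \<in> {1..d}" "k = d + k'" using 4 k unfolding k'_def by auto
      have "[B (d+j') - B (d+k') = (- int (N div b j')) - (- int (N div b k'))] (mod int N)"
        by (rule cong_diff[OF hB[OF j'(1)] hB[OF k'(1)]])
      hence "[B j - B k = (- int (N div b j')) - (- int (N div b k'))] (mod int N)"
        using j'(2) k'(2) by simp
      moreover have "(- int (N div b j')) - (- int (N div b k')) = int j' - int k'"
        using hqi[of j'] hqi[of k'] j' k' by auto
      ultimately have "[B j - B k = int j' - int k'] (mod int N)" by simp
      hence "gcd (B j - B k) (int N) = gcd (int j' - int k') (int N)" by (rule cong_gcd_eq)
      moreover have "gcd (int j' - int k') (int N) = 1"
        using small_int[OF D_gcd, where x="int j' - int k'"] j' k' jk by auto
      ultimately show ?thesis by simp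
    qed
  qed
  show ?thesis using part1 part2 by blast
qed

end
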